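(* Let $u\geq 1$, $a=(-u,-1)$, $b=(u,1)$, $h(x)=-u/x$, and fix $x\in(-u,0)$. Then for all $p\neq 0$ close enough to zero, whenever $y_p>1$ and $(x,y_p)\in B_p(a,b)$, both $y_p$ and $h(x)$ lie in the open interval $(1,\,2h(x)+3)$.
   Context: For $p\neq 0$ and $(x,y)\in\mathbb{R}^2$ let $L_p((x,y))=(|x|^p+|y|^p)^{1/p}$; for $p<0$ this is extended by setting $L_p((x,y))=0$ whenever $x=0$ or $y=0$. The bisector is $B_p(a,b)=\{q\in\mathbb{R}^2: L_p(a-q)=L_p(b-q)\}$. *)

theory Defs
  imports "HOL-Analysis.Analysis"
begin

text \<open>The L_p "norm" on R^2 for p \<noteq> 0; for p < 0 it is set to 0 when a coordinate vanishes.\<close>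
definition Lp :: "real \<Rightarrow> real \<times> real \<Rightarrow> real" where
  "Lp p q = (if p < 0 \<and> (fst q = 0 \<or> snd q = 0) then 0
             else (\<bar>fst q\<bar> powr p + \<bar>snd q\<bar> powr p) powr (1 / p))"

definition bisector :: "real \<Rightarrow> real \<times> real \<Rightarrow> real \<times> real \<Rightarrow> (real \<times> real) set" where
  "bisector p a b = {q. Lp p (a - q) = Lp p (b - q)}"

end

theory Submission imports Defs begin

lemma lim_pow_quot:
  fixes z :: real assumes "z > 0"
  shows "((\<lambda>p. (z powr p - 1) / p) \<longlongrightarrow> ln z) (at 0)"
proof -
  have "((\<lambda>p. exp (p * ln z)) has_field_derivative exp (0 * ln z) * (1 * ln z)) (at 0)"
    by (auto intro!: derivative_eq_intros)
  then have "((\<lambda>p. exp (p * ln z)) has_field_derivative ln z) (at 0)" by simp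
  then have "((\<lambda>p. (exp (p * ln z) - 1) / p) \<longlongrightarrow> ln z) (at 0)"
    by (simp add: has_field_derivative_iff)
  moreover have "\<And>p. (exp (p * ln z) - 1) / p = (z powr p - 1) / p"
    using assms by (simp add: powr_def mult.commute)
  ultimately show ?thesis by simp
qed

lemma G_mono:
  fixes p Y y :: real assumes "p < 1" "1 < Y" "Y \<le> y"
  shows "p * ((1 + y) powr p - (y - 1) powr p) \<le> p * ((1 + Y) powr p - (Y - 1) powr p)"
proof (rule DERIV_nonpos_imp_nonincreasing[OF assms(3)])
  fix t assume t: "Y \<le> t" "t \<le> y"
  then have t1: "t > 1" using assms by simp
  have "DERIV (\<lambda>t. p * ((1 + t) powr p - (t - 1) powr p)) t :>
        p * (p * (1 + t) powr (p - 1) * 1 - p * (t - 1) powr (p - 1) * 1)"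
    using t1 by (auto intro!: derivative_eq_intros DERIV_fun_powr)
  moreover have "(1 + t) powr (p - 1) \<le> (t - 1) powr (p - 1)"
    using t1 assms(1) by (intro powr_mono2') auto
  then have "p * (p * (1 + t) powr (p - 1) * 1 - p * (t - 1) powr (p - 1) * 1) \<le> 0"
    by (simp add: algebra_simps) (metis mult_left_mono mult_le_cancel_right zero_le_square mult.assoc power2_eq_square)
  ultimately show "\<exists>d. DERIV (\<lambda>t. p * ((1 + t) powr p - (t - 1) powr p)) t :> d \<and> d \<le> 0" by blast
qed


theorem lemma6:
  fixes u x :: real and h :: "real \<Rightarrow> real"
  assumes "u \<ge> 1"
    and "h = (\<lambda>t. - u / t)"
    and "- u < x" and "x < 0"
  shows "\<exists>\<delta>>0. \<forall>p. p \<noteq> 0 \<and> \<bar>p\<bar> < \<delta> \<longrightarrow>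
           (\<forall>y. y > 1 \<and> (x, y) \<in> bisector p (- u, - 1) (u, 1) \<longrightarrow>
              (1 < y \<and> y < 2 * h x + 3) \<and> (1 < h x \<and> h x < 2 * h x + 3))"
proof -
  define h0 where "h0 = - u / x"
  define Y where "Y = 2 * h0 + 3"
  define A where "A = u + x"
  define C where "C = u - x"
  have hx: "h x = h0" using assms(2) h0_def by simp
  have h0gt: "h0 > 1" using assms(3,4) unfolding h0_def by (simp add: field_simps)
  have A0: "A > 0" and C0: "C > 0" using assms unfolding A_def C_def by auto
  have Y1: "Y > 1" using h0gt Y_def by simp
  have key: "(Y + 1) * A < C * (Y - 1)"
  proof -
    have "Y * x < - u" using h0gt assms(4) unfolding Y_def h0_def
      by (simp add: field_simps)
    then show ?thesis unfolding A_def C_def by (simp add: algebra_simps)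
  qed
  have lnneg: "ln (Y + 1) - ln (Y - 1) - ln C + ln A < 0"
  proof -
    have "ln ((Y + 1) * A) < ln (C * (Y - 1))"
      using key A0 C0 Y1 by (intro ln_less_cancel_iff[THEN iffD2]) auto
    then show ?thesis using A0 C0 Y1 by (simp add: ln_mult)
  qed
  define phi where "phi p = ((Y + 1) powr p - 1) / p - ((Y - 1) powr p - 1) / p
      - (C powr p - 1) / p + (A powr p - 1) / p" for p
  have "(phi \<longlongrightarrow> ln (Y + 1) - ln (Y - 1) - ln C + ln A) (at 0)"
    unfolding phi_def using Y1 A0 C0
    by (intro tendsto_intros lim_pow_quot) auto
  then have "\<forall>\<^sub>F p in at 0. phi p < 0"
    using lnneg by (simp add: order_tendsto_iff)
  then obtain d where d: "d > 0" "\<And>p. p \<noteq> 0 \<Longrightarrow> dist p 0 < d \<Longrightarrow> phi p < 0"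
    unfolding eventually_at by auto
  show ?thesis
  proof (rule exI[of _ "min d 1"], intro conjI allI impI)
    show "min d 1 > 0" using d by simp
    fix p y assume p: "p \<noteq> 0 \<and> \<bar>p\<bar> < min d 1"
      and y: "1 < y \<and> (x, y) \<in> bisector p (- u, - 1) (u, 1)"
    have ph: "phi p < 0" using d p by simp
    have p1: "p < 1" using p by (simp add: abs_less_iff)
    show "1 < y" using y by simp
    show "1 < h x" "h x < 2 * h x + 3" using hx h0gt by auto
    show "y < 2 * h x + 3"
    proof (rule ccontr)
      assume "\<not> y < 2 * h x + 3"
      then have yY: "Y \<le> y" using hx Y_def by simp
      have eq: "(A powr p + (1 + y) powr p) powr (1/p) = (C powr p + (y - 1) powr p) powr (1/p)"
        using y A0 C0 assms(3,4) p unfolding bisector_def Lp_def A_def C_def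
        by (auto split: if_splits simp: abs_if add.commute)
      have "(A powr p + (1 + y) powr p) = (C powr p + (y - 1) powr p)"
      proof -
        have "((A powr p + (1 + y) powr p) powr (1/p)) powr p = ((C powr p + (y - 1) powr p) powr (1/p)) powr p"
          using eq by simp
        then show ?thesis using p A0 C0 y by (simp add: powr_powr)
      qed
      then have e2: "(1 + y) powr p - (y - 1) powr p = C powr p - A powr p" by simp
      have m: "p * ((1 + y) powr p - (y - 1) powr p) \<le> p * ((1 + Y) powr p - (Y - 1) powr p)"
        using G_mono[OF p1 Y1 yY] .
      have "p * phi p = (Y + 1) powr p - (Y - 1) powr p - C powr p + A powr p"
        unfolding phi_def using p by (simp add: field_simps)
      then have "p * (p * phi p) = p * ((1 + Y) powr p - (Y - 1) powr p) - p * (C powr p - A powr p)"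
        by (simp add: algebra_simps) (metis distrib_left add.assoc)
      moreover have "p * (p * phi p) < 0" using ph p
        by (metis mult.assoc mult_neg_pos mult_pos_neg not_square_less_zero zero_less_mult_iff linorder_neqE_linordered_idom)
      ultimately have "p * ((1 + Y) powr p - (Y - 1) powr p) < p * (C powr p - A powr p)" by simp
      with m e2 show False by simp
    qed
  qed
qed

end
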